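(* Let $(s,g)\in\mathcal{S}\times\mathcal{S}$ with $s\neq g$. Assume the local embedding error is bounded as $$\sup_{s'\in N(s)\cup\{s\}}\bigl|d^*(s',g)-\|\phi(s')-\phi(g)\|\bigr|\le\epsilon_e,$$ and the directional movement error is bounded as $\|z'^*(s,g)-\hat z'(s,g)\|\le\epsilon_d$. If $4\epsilon_e+\epsilon_d<1$, then $\hat\pi(s,g)$ is an optimal action at $(s,g)$, i.e. $d^*(p(s,\hat\pi(s,g)),g)=d^*(s,g)-1$.
   Context: Consider a deterministic Markov decision process with state space $\mathcal{S}$, action space $\mathcal{A}$ and deterministic transition function $p:\mathcal{S}\times\mathcal{A}\to\mathcal{S}$. Let $d^*:\mathcal{S}\times\mathcal{S}\to\mathbb{R}$ be the optimal temporal distance: $d^*(s,g)$ is the minimum number of time steps needed to reach $g$ from $s$, so it is a nonnegative integer and $d^*(s,s)=0$. Let $\phi:\mathcal{S}\to\mathcal{Z}$ be a map into a real Hilbert space with inner product $\langle\cdot,\cdot\rangle$ and induced norm $\|\cdot\|$. Let $N(s):=\{p(s,a):a\in\mathcal{A}\}$ be the set of neighbor states of $s$. For a state $s$ and a goal $g$ define $$z'^*(s,g):=\phi(s)+\frac{\phi(g)-\phi(s)}{\|\phi(g)-\phi(s)\|},$$ $$\hat\pi(s,g):=\arg\max_{a\in\mathcal{A}}\Bigl\langle\phi(s')-\phi(s),\frac{\phi(g)-\phi(s)}{\|\phi(g)-\phi(s)\|}\Bigr\rangle\ \text{ subject to } s'=p(s,a),\ \|\phi(s)-\phi(s')\|\le1,$$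 $$\hat z'(s,g):=\phi\bigl(p(s,\hat\pi(s,g))\bigr).$$ An action $a$ is optimal at $(s,g)$ if it reduces the temporal distance to $g$ by one, i.e. $d^*(p(s,a),g)=d^*(s,g)-1$. *)

theory Defs
  imports "HOL-Analysis.Analysis"
begin

text \<open>Deterministic MDP with transition function p. Executing the action sequence as
from s ends in the state foldl p s as.\<close>

definition reachable :: "('s \<Rightarrow> 'a \<Rightarrow> 's) \<Rightarrow> 's \<Rightarrow> 's \<Rightarrow> bool" where
  "reachable p s g \<longleftrightarrow> (\<exists>as. foldl p s as = g)"

definition dstar :: "('s \<Rightarrow> 'a \<Rightarrow> 's) \<Rightarrow> 's \<Rightarrow> 's \<Rightarrow> real" where
  "dstar p s g = real (LEAST n. \<exists>as. length as = n \<and> foldl p s as = g)"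

definition nbrs :: "('s \<Rightarrow> 'a \<Rightarrow> 's) \<Rightarrow> 's \<Rightarrow> 's set" where
  "nbrs p s = {p s a | a. True}"

definition zstar' :: "('s \<Rightarrow> 'z::real_normed_vector) \<Rightarrow> 's \<Rightarrow> 's \<Rightarrow> 'z" where
  "zstar' \<phi> s g = \<phi> s + (\<phi> g - \<phi> s) /\<^sub>R norm (\<phi> g - \<phi> s)"

definition pihat :: "('s \<Rightarrow> 'a \<Rightarrow> 's) \<Rightarrow> ('s \<Rightarrow> 'z::real_inner) \<Rightarrow> 's \<Rightarrow> 's \<Rightarrow> 'a" where
  "pihat p \<phi> s g = arg_max
      (\<lambda>a. inner (\<phi> (p s a) - \<phi> s) ((\<phi> g - \<phi> s) /\<^sub>R norm (\<phi> g - \<phi> s)))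
      (\<lambda>a. norm (\<phi> s - \<phi> (p s a)) \<le> 1)"

definition zhat' :: "('s \<Rightarrow> 'a \<Rightarrow> 's) \<Rightarrow> ('s \<Rightarrow> 'z::real_inner) \<Rightarrow> 's \<Rightarrow> 's \<Rightarrow> 'z" where
  "zhat' p \<phi> s g = \<phi> (p s (pihat p \<phi> s g))"

end

theory Submission
  imports Defs
begin

lemma dstar_le: "foldl p s as = g \<Longrightarrow> dstar p s g \<le> real (length as)"
  unfolding dstar_def by (auto intro!: Least_le)

lemma dstar_wit: "reachable p s g \<Longrightarrow> \<exists>as. foldl p s as = g \<and> dstar p s g = real (length as)"
proof -
  assume "reachable p s g"
  then obtain as where "foldl p s as = g" unfolding reachable_def by blast
  then have "\<exists>n as. length as = n \<and> foldl p s as = g" by blast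
  from LeastI_ex[OF this] show ?thesis unfolding dstar_def by auto
qed

lemma dstar_ge1: "reachable p s g \<Longrightarrow> s \<noteq> g \<Longrightarrow> dstar p s g \<ge> 1"
proof -
  assume r: "reachable p s g" and n: "s \<noteq> g"
  from dstar_wit[OF r] obtain as where "foldl p s as = g" "dstar p s g = real (length as)" by blast
  moreover have "as \<noteq> []" using calculation n by auto
  ultimately show ?thesis by (cases as) auto
qed

theorem theoremC1:
  fixes p :: "'s \<Rightarrow> 'a \<Rightarrow> 's"
    and \<phi> :: "'s \<Rightarrow> 'z::{real_inner, complete_space}"
    and s g :: 's and \<epsilon>e \<epsilon>d :: real
  assumes reach: "\<forall>s'\<in>nbrs p s \<union> {s}. reachable p s' g"
    and neq: "s \<noteq> g"
    and emb: "\<forall>s'\<in>nbrs p s \<union> {s}. \<bar>dstar p s' g - norm (\<phi> s' - \<phi> g)\<bar> \<le> \<epsilon>e"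
    and dir: "norm (zstar' \<phi> s g - zhat' p \<phi> s g) \<le> \<epsilon>d"
    and small: "4 * \<epsilon>e + \<epsilon>d < 1"
  shows "dstar p (p s (pihat p \<phi> s g)) g = dstar p s g - 1"
proof -
  define a where "a = pihat p \<phi> s g"
  define t where "t = p s a"
  have tn: "t \<in> nbrs p s" unfolding t_def nbrs_def by blast
  have rs: "reachable p s g" and rt: "reachable p t g" using reach tn by auto
  have es: "\<bar>dstar p s g - norm (\<phi> s - \<phi> g)\<bar> \<le> \<epsilon>e" using emb by auto
  have et: "\<bar>dstar p t g - norm (\<phi> t - \<phi> g)\<bar> \<le> \<epsilon>e" using emb tn by auto
  have D1: "dstar p s g \<ge> 1" using dstar_ge1[OF rs neq] .
  have ed: "\<epsilon>d \<ge> 0" using dir norm_ge_zero order_trans by blast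
  have ee: "\<epsilon>e \<ge> 0" using es by linarith
  define r where "r = norm (\<phi> g - \<phi> s)"
  have rs': "norm (\<phi> s - \<phi> g) = r" unfolding r_def by (simp add: norm_minus_commute)
  have rpos: "r > 0" using es D1 small ed ee rs' by linarith
  define u where "u = (\<phi> g - \<phi> s) /\<^sub>R r"
  have nu: "norm u = 1" using rpos unfolding u_def r_def by simp
  have dt: "norm (\<phi> s + u - \<phi> t) \<le> \<epsilon>d"
    using dir unfolding zstar'_def zhat'_def u_def r_def t_def a_def by simp
  have key: "norm (\<phi> s + u - \<phi> g) = \<bar>r - 1\<bar>"
  proof -
    have "\<phi> s + u - \<phi> g = (1 / r - 1) *\<^sub>R (\<phi> g - \<phi> s)"
      unfolding u_def by (simp add: algebra_simps divide_inverse)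
    then have "norm (\<phi> s + u - \<phi> g) = \<bar>1 / r - 1\<bar> * r" unfolding r_def by simp
    also have "\<dots> = \<bar>r - 1\<bar>" using rpos
      by (simp add: abs_if field_simps)
    finally show ?thesis .
  qed
  have "norm (\<phi> t - \<phi> g) \<le> norm (\<phi> s + u - \<phi> g) + norm (\<phi> s + u - \<phi> t)"
    using norm_triangle_ineq4[of "\<phi> s + u - \<phi> g" "\<phi> s + u - \<phi> t"] by simp
  then have nt: "norm (\<phi> t - \<phi> g) \<le> \<bar>r - 1\<bar> + \<epsilon>d" using key dt by linarith
  have lt: "dstar p t g < dstar p s g"
  proof -
    have a1: "dstar p t g \<le> norm (\<phi> t - \<phi> g) + \<epsilon>e" using et by (simp add: abs_le_iff)
    have a2: "norm (\<phi> s - \<phi> g) - \<epsilon>e \<le> dstar p s g" using es by (simp add: abs_le_iff)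
    have a3: "dstar p s g \<le> norm (\<phi> s - \<phi> g) + \<epsilon>e" using es by (simp add: abs_le_iff)
    show ?thesis
    proof (cases "r \<ge> 1")
      case True
      then have "\<bar>r - 1\<bar> = r - 1" by simp
      then show ?thesis using nt a1 a2 rs' small ee ed by linarith
    next
      case False
      then have "\<bar>r - 1\<bar> = 1 - r" by simp
      then show ?thesis using nt a1 a2 a3 rs' small D1 ee ed by linarith
    qed
  qed
  obtain bs where bs: "foldl p t bs = g" "dstar p t g = real (length bs)" using dstar_wit[OF rt] by blast
  obtain cs where cs: "foldl p s cs = g" "dstar p s g = real (length cs)" using dstar_wit[OF rs] by blast
  have "foldl p s (a # bs) = g" using bs t_def by simp
  then have "dstar p s g \<le> real (length (a # bs))" by (rule dstar_le)
  then have le: "length cs \<le> Suc (length bs)" using cs(2) by simp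
  have "length bs < length cs" using lt bs(2) cs(2) by simp
  then have "length cs = Suc (length bs)" using le by linarith
  then have "dstar p t g = dstar p s g - 1" using bs(2) cs(2) by simp
  then show ?thesis unfolding t_def a_def .
qed

end
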